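(* Let $\lambda\in\Lambda$ (single-hop). For every $q\in\mathbb R_+^N$ and every $\kappa>0$, $\Delta(\kappa q)=\kappa\,\Delta(q)$.
   Context: Single-hop network with $N$ queues and finite $\mathcal S\subset\mathbb R_+^N$. $f:\mathbb R_+\to\mathbb R_+$ is differentiable, strictly increasing, $f(0)=0$, applied componentwise, and satisfies: for all $q\in\mathbb R_+^N$, $\pi\in\mathcal S$, if $\pi\cdot f(q)=\max_{\rho\in\mathcal S}\rho\cdot f(q)$ then $\pi\cdot f(\kappa q)=\max_{\rho\in\mathcal S}\rho\cdot f(\kappa q)$ for all $\kappa\ge0$. $L(q)=\sum_n\int_0^{q_n}f$. $\langle\mathcal S\rangle$ convex hull; $\Lambda=\{\lambda\in\mathbb R_+^N:\lambda\le\sigma$ for some $\sigma\in\langle\mathcal S\rangle\}$. $E$ = extreme points of $\{\xi\in\mathbb R_+^N:\max_\pi\xi\cdot\pi\le1\}$, $\mathcal S^*$ maximal elements of $E$, $\Xi(\lambda)=\{\xi\in\mathcal S^*:\xi\cdot\lambda=1\}$. $\Delta(q)$ is the unique minimizer of $L(r)$ over $r\in\mathbb R_+^N$ subject to $\xi\cdot r\ge\xi\cdot q$ for all $\xi\in\Xi(\lambda)$ and $r_n\le q_n$ for all $n$ with $\lambda_n=0$. *)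

theory Defs
  imports "HOL-Analysis.Analysis"
begin

definition nonneg_vec :: "real^'n \<Rightarrow> bool" where
  "nonneg_vec x \<longleftrightarrow> (\<forall>i. 0 \<le> x $ i)"

definition vle :: "real^'n \<Rightarrow> real^'n \<Rightarrow> bool" where
  "vle x y \<longleftrightarrow> (\<forall>i. x $ i \<le> y $ i)"

definition fvec :: "(real \<Rightarrow> real) \<Rightarrow> real^'n \<Rightarrow> real^'n" where
  "fvec f q = (\<chi> i. f (q $ i))"

definition admissible_f :: "(real \<Rightarrow> real) \<Rightarrow> (real^'n) set \<Rightarrow> bool" where
  "admissible_f f S \<longleftrightarrow>
     (\<forall>x\<ge>0. f differentiable (at x within {0..})) \<and>
     strict_mono_on {0..} f \<and> f 0 = 0 \<and>
     (\<forall>q \<pi>. nonneg_vec q \<longrightarrow> \<pi> \<in> S \<longrightarrow>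
        (\<forall>\<rho>\<in>S. \<rho> \<bullet> fvec f q \<le> \<pi> \<bullet> fvec f q) \<longrightarrow>
        (\<forall>\<kappa>\<ge>0. \<forall>\<rho>\<in>S. \<rho> \<bullet> fvec f (\<kappa> *\<^sub>R q) \<le> \<pi> \<bullet> fvec f (\<kappa> *\<^sub>R q)))"

definition Lfun :: "(real \<Rightarrow> real) \<Rightarrow> real^'n \<Rightarrow> real" where
  "Lfun f q = (\<Sum>n\<in>UNIV. integral {0..q $ n} f)"

definition Lambda :: "(real^'n) set \<Rightarrow> (real^'n) set" where
  "Lambda S = {lam. nonneg_vec lam \<and> (\<exists>\<sigma>\<in>convex hull S. vle lam \<sigma>)}"

definition dual_poly :: "(real^'n) set \<Rightarrow> (real^'n) set" where
  "dual_poly S = {\<xi>. nonneg_vec \<xi> \<and> (\<forall>\<pi>\<in>S. \<xi> \<bullet> \<pi> \<le> 1)}"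

definition Eset :: "(real^'n) set \<Rightarrow> (real^'n) set" where
  "Eset S = {\<xi>. \<xi> extreme_point_of dual_poly S}"

definition Sstar :: "(real^'n) set \<Rightarrow> (real^'n) set" where
  "Sstar S = {\<xi>\<in>Eset S. \<not> (\<exists>\<xi>'\<in>Eset S. vle \<xi> \<xi>' \<and> \<xi>' \<noteq> \<xi>)}"

definition Xi :: "(real^'n) set \<Rightarrow> real^'n \<Rightarrow> (real^'n) set" where
  "Xi S lam = {\<xi>\<in>Sstar S. \<xi> \<bullet> lam = 1}"

definition Dfeas :: "(real^'n) set \<Rightarrow> real^'n \<Rightarrow> real^'n \<Rightarrow> (real^'n) set" where
  "Dfeas S lam q = {r. nonneg_vec r \<and> (\<forall>\<xi>\<in>Xi S lam. \<xi> \<bullet> r \<ge> \<xi> \<bullet> q)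
                    \<and> (\<forall>n. lam $ n = 0 \<longrightarrow> r $ n \<le> q $ n)}"

definition Delta :: "(real \<Rightarrow> real) \<Rightarrow> (real^'n) set \<Rightarrow> real^'n \<Rightarrow> real^'n \<Rightarrow> real^'n" where
  "Delta f S lam q = (THE r. r \<in> Dfeas S lam q \<and> (\<forall>r'\<in>Dfeas S lam q. Lfun f r \<le> Lfun f r'))"

end

theory Submission
  imports Defs
begin

locale qs =
  fixes f :: "real \<Rightarrow> real" and S :: "(real^'n) set" and lam :: "real^'n"
  assumes finS: "finite S" and Snn: "\<forall>\<pi>\<in>S. nonneg_vec \<pi>"
    and adm: "admissible_f f S" and lamL: "lam \<in> Lambda S"
begin

lemma f_cont: "continuous_on {0..} f"
proof -
  have "\<forall>x\<ge>0. f differentiable (at x within {0..})" using adm by (simp add: admissible_f_def)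
  then show ?thesis
    by (simp add: continuous_on_eq_continuous_within differentiable_imp_continuous_within)
qed

lemma f_sm: "strict_mono_on {0..} f" using adm by (simp add: admissible_f_def)

lemma f_smono: "0 \<le> x \<Longrightarrow> x < y \<Longrightarrow> f x < f y"
  using f_sm unfolding strict_mono_on_def by simp

lemma f0: "f 0 = 0" using adm by (simp add: admissible_f_def)

lemma f_mono: "0 \<le> x \<Longrightarrow> x \<le> y \<Longrightarrow> f x \<le> f y"
  using f_smono by (cases "x = y") (auto simp: less_eq_real_def)

lemma f_nonneg: "0 \<le> x \<Longrightarrow> 0 \<le> f x"
  using f_mono[of 0 x] f0 by simp

lemma f_pos: assumes "0 < x" shows "0 < f x"
proof -
  have "f 0 < f x" by (rule f_smono) (use assms in auto)
  then show ?thesis by (simp add: f0)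
qed

lemma f_zero_iff: assumes "0 \<le> x" shows "f x = 0 \<longleftrightarrow> x = 0"
proof (cases "x = 0")
  case True then show ?thesis by (simp add: f0)
next
  case False then have "0 < x" using assms by simp
  then show ?thesis using f_pos[of x] by simp
qed

lemma f_int: assumes "0 \<le> a" shows "f integrable_on {a..b}"
proof -
  have "{a..b} \<subseteq> {0..}" using assms by auto
  then have "continuous_on {a..b} f" by (rule continuous_on_subset[OF f_cont])
  then show ?thesis by (rule integrable_continuous_interval)
qed

definition F :: "real \<Rightarrow> real" where "F x = integral {0..x} f"

lemma F_le_aux: assumes "0 \<le> x" "x \<le> y" shows "f x * (y - x) \<le> F y - F x"
    "F y - F x \<le> f y * (y - x)"
proof -
  have c: "F y = F x + integral {x..y} f"
    unfolding F_def using Henstock_Kurzweil_Integration.integral_combine[OF assms(1) assms(2) f_int[OF order_refl, of y]] by simp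
  have p1: "\<And>t. t \<in> {x..y} \<Longrightarrow> f x \<le> f t" using f_mono assms(1) by simp
  have p2: "\<And>t. t \<in> {x..y} \<Longrightarrow> f t \<le> f y" using f_mono assms(1) by simp
  have i: "f integrable_on {x..y}" by (rule f_int[OF assms(1)])
  have "integral {x..y} (\<lambda>_. f x) \<le> integral {x..y} f"
    by (rule integral_le[OF integrable_const_ivl i p1])
  then show "f x * (y - x) \<le> F y - F x" using c assms by (simp add: mult.commute)
  have "integral {x..y} f \<le> integral {x..y} (\<lambda>_. f y)"
    by (rule integral_le[OF i integrable_const_ivl p2])
  then show "F y - F x \<le> f y * (y - x)" using c assms by (simp add: mult.commute)
qed

lemma F_ineq: assumes "0 \<le> x" "0 \<le> y" shows "f x * (y - x) \<le> F y - F x"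
proof (cases "x \<le> y")
  case True then show ?thesis using F_le_aux assms by auto
next
  case False then show ?thesis using F_le_aux(2)[of y x] assms by (auto simp: algebra_simps)
qed

lemma F_strict: assumes "0 \<le> x" "0 \<le> y" "x \<noteq> y" shows "f x * (y - x) < F y - F x"
proof -
  define m where "m = (x + y) / 2"
  have m: "0 \<le> m" using assms by (simp add: m_def)
  have 1: "f x * (m - x) \<le> F m - F x" by (rule F_ineq) (use assms m in auto)
  have 2: "f m * (y - m) \<le> F y - F m" by (rule F_ineq) (use assms m in auto)
  show ?thesis
  proof (cases "x < y")
    case True
    then have "x < m" "m < y" by (auto simp: m_def)
    then have "f x < f m" using f_smono assms by auto
    then have "f x * (y - m) < f m * (y - m)" using \<open>m < y\<close> by simp
    then show ?thesis using 1 2 by (simp add: algebra_simps)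
  next
    case False
    then have "y < m" "m < x" using assms by (auto simp: m_def)
    then have "f m < f x" using f_smono m by auto
    then have "f x * (m - y) > f m * (m - y)" using \<open>y < m\<close> by simp
    then show ?thesis using 1 2 by (simp add: algebra_simps)
  qed
qed

lemma F_nonneg: "0 \<le> x \<Longrightarrow> 0 \<le> F x"
  using F_ineq[of 0 x] f0 by (simp add: F_def)

lemma inner_cart: "(x::real^'n) \<bullet> y = (\<Sum>i\<in>UNIV. x$i * y$i)"
  by (simp add: inner_vec_def)

lemma L_eq: "Lfun f r = (\<Sum>i\<in>UNIV. F (r$i))"
  by (simp add: Lfun_def F_def)

lemma L_ineq: assumes "nonneg_vec r" "nonneg_vec r'"
  shows "fvec f r \<bullet> (r' - r) \<le> Lfun f r' - Lfun f r"
proof -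
  have "fvec f r \<bullet> (r' - r) = (\<Sum>i\<in>UNIV. f (r$i) * (r'$i - r$i))"
    by (simp add: inner_vec_def fvec_def)
  also have "\<dots> \<le> (\<Sum>i\<in>UNIV. F (r'$i) - F (r$i))"
    by (rule sum_mono) (use assms in \<open>auto simp: nonneg_vec_def intro!: F_ineq\<close>)
  also have "\<dots> = Lfun f r' - Lfun f r" by (simp add: L_eq sum_subtractf)
  finally show ?thesis .
qed

lemma L_strict: assumes "nonneg_vec r" "nonneg_vec r'" "r \<noteq> r'"
  shows "fvec f r \<bullet> (r' - r) < Lfun f r' - Lfun f r"
proof -
  obtain j where j: "r$j \<noteq> r'$j" using assms(3) by (auto simp: vec_eq_iff)
  have "fvec f r \<bullet> (r' - r) = (\<Sum>i\<in>UNIV. f (r$i) * (r'$i - r$i))"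
    by (simp add: inner_vec_def fvec_def)
  also have "\<dots> < (\<Sum>i\<in>UNIV. F (r'$i) - F (r$i))"
  proof (rule sum_strict_mono_ex1)
    show "\<forall>i\<in>UNIV. f (r$i) * (r'$i - r$i) \<le> F (r'$i) - F (r$i)"
      using assms by (auto simp: nonneg_vec_def intro!: F_ineq)
    show "\<exists>i\<in>UNIV. f (r$i) * (r'$i - r$i) < F (r'$i) - F (r$i)"
      using assms j by (auto simp: nonneg_vec_def intro!: F_strict)
  qed simp
  also have "\<dots> = Lfun f r' - Lfun f r" by (simp add: L_eq sum_subtractf)
  finally show ?thesis .
qed

lemma VI:
  assumes C: "\<And>x. x \<in> C \<Longrightarrow> nonneg_vec x" "convex C"
    and r: "r \<in> C" "\<forall>r'\<in>C. Lfun f r \<le> Lfun f r'" and r': "r' \<in> C"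
  shows "0 \<le> fvec f r \<bullet> (r' - r)"
proof -
  define d where "d = r' - r"
  define g where "g t = (\<Sum>i\<in>UNIV. f (r$i + t * d$i) * d$i)" for t
  have rt: "r + t *\<^sub>R d \<in> C" if "t \<in> {0..1}" for t
  proof -
    have "r + t *\<^sub>R d = (1 - t) *\<^sub>R r + t *\<^sub>R r'" by (simp add: d_def algebra_simps)
    then show ?thesis using convexD[OF C(2) r(1) r', of "1-t" t] that by simp
  qed
  have pos: "0 \<le> g t" if t: "t \<in> {0<..<1}" for t
  proof -
    have "nonneg_vec (r + t *\<^sub>R d)" using rt[of t] t C(1) by auto
    have "fvec f (r + t *\<^sub>R d) \<bullet> (r - (r + t *\<^sub>R d)) \<le> Lfun f r - Lfun f (r + t *\<^sub>R d)"
      by (rule L_ineq) (use C(1) r(1) rt t in auto)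
    moreover have "Lfun f r \<le> Lfun f (r + t *\<^sub>R d)" using r(2) rt t by auto
    moreover have "fvec f (r + t *\<^sub>R d) \<bullet> (r - (r + t *\<^sub>R d)) = - t * g t"
      by (simp add: g_def inner_vec_def fvec_def sum_distrib_left algebra_simps)
    ultimately have "t * g t \<ge> 0" by linarith
    then show ?thesis using t by (simp add: zero_le_mult_iff)
  qed
  have nn: "0 \<le> r$i + t * d$i" if "t \<in> {0..1}" for t i
  proof -
    have "nonneg_vec (r + t *\<^sub>R d)" using rt[OF that] C(1) by auto
    then show ?thesis by (simp add: nonneg_vec_def)
  qed
  have "continuous_on {0..1} g"
    unfolding g_def
  proof (intro continuous_intros)
    fix i
    show "continuous_on {0..1} (\<lambda>t. f (r$i + t * d$i))"
      by (rule continuous_on_compose2[OF f_cont]) (auto intro!: continuous_intros nn)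
  qed
  then have "(g \<longlongrightarrow> g 0) (at 0 within {0..1})"
    by (simp add: continuous_on_def)
  then have lim: "(g \<longlongrightarrow> g 0) (at_right 0)"
    by (simp add: at_within_Icc_at_right)
  have "0 \<le> g 0"
    by (rule tendsto_lowerbound[OF lim]) (auto intro: eventually_mono[OF eventually_at_right_real[of 0 1]] pos)
  then show ?thesis by (simp add: g_def d_def inner_vec_def fvec_def)
qed

lemma D_nonneg: "x \<in> Dfeas S lam q \<Longrightarrow> nonneg_vec x"
  by (simp add: Dfeas_def)

lemma D_convex: "convex (Dfeas S lam q)"
proof (rule convexI)
  fix x y :: "real^'n" and u v :: real
  assume x: "x \<in> Dfeas S lam q" and y: "y \<in> Dfeas S lam q" and uv: "0 \<le> u" "0 \<le> v" "u + v = 1"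
  have "nonneg_vec (u *\<^sub>R x + v *\<^sub>R y)"
    using x y uv by (auto simp: Dfeas_def nonneg_vec_def)
  moreover have "\<xi> \<bullet> q \<le> \<xi> \<bullet> (u *\<^sub>R x + v *\<^sub>R y)" if "\<xi> \<in> Xi S lam" for \<xi>
  proof -
    have "\<xi> \<bullet> q \<le> \<xi> \<bullet> x" "\<xi> \<bullet> q \<le> \<xi> \<bullet> y" using x y that by (auto simp: Dfeas_def)
    then have "u * (\<xi> \<bullet> q) + v * (\<xi> \<bullet> q) \<le> u * (\<xi> \<bullet> x) + v * (\<xi> \<bullet> y)"
      using uv by (intro add_mono mult_left_mono) auto
    moreover have "u * (\<xi> \<bullet> q) + v * (\<xi> \<bullet> q) = \<xi> \<bullet> q"
      using uv by (metis distrib_right mult_1)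
    ultimately show ?thesis by (simp add: inner_add_right)
  qed
  moreover have "(u *\<^sub>R x + v *\<^sub>R y) $ n \<le> q $ n" if "lam $ n = 0" for n
  proof -
    have "x$n \<le> q$n" "y$n \<le> q$n" using x y that by (auto simp: Dfeas_def)
    then have "u * x$n + v * y$n \<le> u * q$n + v * q$n"
      using uv by (intro add_mono mult_left_mono) auto
    moreover have "u * q$n + v * q$n = q$n"
      using uv by (metis distrib_right mult_1)
    ultimately show ?thesis by simp
  qed
  ultimately show "u *\<^sub>R x + v *\<^sub>R y \<in> Dfeas S lam q" by (simp add: Dfeas_def)
qed

lemma D_self: "nonneg_vec q \<Longrightarrow> q \<in> Dfeas S lam q"
  by (simp add: Dfeas_def)

lemma D_closed: "closed (Dfeas S lam q)"
proof -
  have e: "Dfeas S lam q = {r. (\<forall>i. 0 \<le> r$i) \<and> (\<forall>\<xi>. \<xi> \<in> Xi S lam \<longrightarrow> \<xi> \<bullet> q \<le> \<xi> \<bullet> r)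
        \<and> (\<forall>n. lam $ n = 0 \<longrightarrow> r $ n \<le> q $ n)}"
    by (auto simp: Dfeas_def nonneg_vec_def)
  show ?thesis unfolding e
    by (intro closed_Collect_conj closed_Collect_all closed_Collect_imp open_Collect_const
        closed_Collect_le continuous_intros)
qed

lemma D_scale: assumes "\<kappa> > 0"
  shows "r \<in> Dfeas S lam q \<longleftrightarrow> \<kappa> *\<^sub>R r \<in> Dfeas S lam (\<kappa> *\<^sub>R q)"
  using assms by (auto simp: Dfeas_def nonneg_vec_def zero_le_mult_iff)

lemma F_cont: "continuous_on {0..M} F"
  unfolding F_def by (rule indefinite_integral_continuous_1[OF f_int[OF order_refl]])

lemma F_lower: assumes "0 \<le> x" shows "f 1 * (x - 1) \<le> F x"
  using F_ineq[of 1 x] F_nonneg[of 1] assms by simp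

lemma L_ge_comp: assumes "nonneg_vec r" shows "F (r$i) \<le> Lfun f r"
  unfolding L_eq by (rule member_le_sum) (use assms in \<open>auto simp: nonneg_vec_def intro: F_nonneg\<close>)

lemma exists_min: assumes q: "nonneg_vec q"
  shows "\<exists>r\<in>Dfeas S lam q. \<forall>r'\<in>Dfeas S lam q. Lfun f r \<le> Lfun f r'"
proof -
  define D where "D = Dfeas S lam q"
  have f1: "0 < f 1" by (rule f_pos) simp
  define M where "M = 1 + Lfun f q / f 1"
  have bound: "x \<le> M" if "0 \<le> x" "F x \<le> Lfun f q" for x
  proof -
    have "f 1 * (x - 1) \<le> Lfun f q" using F_lower[OF that(1)] that(2) by simp
    then have "x - 1 \<le> Lfun f q / f 1" using f1 by (simp add: field_simps)
    then show ?thesis by (simp add: M_def)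
  qed
  define B where "B = cbox (0::real^'n) (\<chi> _. M)"
  have memB: "x \<in> B \<longleftrightarrow> (\<forall>i. 0 \<le> x$i \<and> x$i \<le> M)" for x
    by (simp add: B_def mem_box_cart)
  have K: "compact (D \<inter> B)"
    unfolding D_def B_def by (intro closed_Int_compact D_closed compact_cbox)
  have qK: "q \<in> D \<inter> B"
    using q D_self[OF q] L_ge_comp[OF q] bound by (auto simp: D_def memB nonneg_vec_def)
  have cont: "continuous_on (D \<inter> B) (Lfun f)"
  proof -
    have "continuous_on (D \<inter> B) (\<lambda>r. \<Sum>i\<in>UNIV. F (r$i))"
    proof (intro continuous_on_sum)
      fix i
      show "continuous_on (D \<inter> B) (\<lambda>r. F (r$i))"
        by (rule continuous_on_compose2[OF F_cont[of M]]) (auto intro!: continuous_intros simp: memB)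
    qed
    then show ?thesis by (simp add: L_eq[abs_def])
  qed
  obtain r where r: "r \<in> D \<inter> B" "\<forall>y\<in>D \<inter> B. Lfun f r \<le> Lfun f y"
    using continuous_attains_inf[OF K _ cont] qK by blast
  have "Lfun f r \<le> Lfun f r'" if r': "r' \<in> D" for r'
  proof (cases "r' \<in> B")
    case True then show ?thesis using r r' by auto
  next
    case False
    have nn: "nonneg_vec r'" using r' D_nonneg by (auto simp: D_def)
    then obtain i where "\<not> r'$i \<le> M" using False by (auto simp: memB nonneg_vec_def)
    then have "Lfun f q < F (r'$i)" using bound[of "r'$i"] nn by (force simp: nonneg_vec_def)
    also have "\<dots> \<le> Lfun f r'" by (rule L_ge_comp[OF nn])
    finally have "Lfun f q < Lfun f r'" .
    moreover have "Lfun f r \<le> Lfun f q" using r qK by auto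
    ultimately show ?thesis by linarith
  qed
  then show ?thesis using r by (auto simp: D_def)
qed

lemma unique_min: assumes "r1 \<in> C" "\<forall>r'\<in>C. Lfun f r1 \<le> Lfun f r'" "r2 \<in> C" "\<forall>r'\<in>C. Lfun f r2 \<le> Lfun f r'"
   and C: "\<And>x. x \<in> C \<Longrightarrow> nonneg_vec x" "convex C"
 shows "r1 = r2"
proof (rule ccontr)
  assume ne: "r1 \<noteq> r2"
  have "0 \<le> fvec f r1 \<bullet> (r2 - r1)" by (rule VI[OF C assms(1,2,3)])
  also have "\<dots> < Lfun f r2 - Lfun f r1" by (rule L_strict[OF C(1) C(1) ne]) (use assms in auto)
  finally show False using assms by force
qed

lemma S_nn: "\<pi> \<in> S \<Longrightarrow> 0 \<le> \<pi>$i" using Snn by (auto simp: nonneg_vec_def)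

lemma lam_nn: "0 \<le> lam$i" using lamL by (auto simp: Lambda_def nonneg_vec_def)

lemma lam_sigma: "\<exists>\<alpha>. (\<forall>\<pi>\<in>S. 0 \<le> \<alpha> \<pi>) \<and> sum \<alpha> S = 1 \<and> vle lam (\<Sum>\<pi>\<in>S. \<alpha> \<pi> *\<^sub>R \<pi>)"
proof -
  obtain \<sigma> where "\<sigma> \<in> convex hull S" "vle lam \<sigma>" using lamL by (auto simp: Lambda_def)
  then show ?thesis using convex_hull_finite[OF finS] by auto
qed

lemma inner_nn: "nonneg_vec x \<Longrightarrow> nonneg_vec y \<Longrightarrow> 0 \<le> x \<bullet> (y::real^'n)"
  by (simp add: inner_vec_def nonneg_vec_def sum_nonneg)

lemma inner_vle: "nonneg_vec u \<Longrightarrow> vle x y \<Longrightarrow> u \<bullet> x \<le> u \<bullet> (y::real^'n)"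
  by (auto simp: inner_vec_def nonneg_vec_def vle_def intro!: sum_mono mult_left_mono)

lemma inner_sigma: "u \<bullet> (\<Sum>\<pi>\<in>S. \<alpha> \<pi> *\<^sub>R \<pi>) = (\<Sum>\<pi>\<in>S. \<alpha> \<pi> * (u \<bullet> \<pi>))"
  by (simp add: inner_sum_right)

lemma dual_lam: assumes "\<xi> \<in> dual_poly S" shows "\<xi> \<bullet> lam \<le> 1"
proof -
  obtain \<alpha> where a: "\<forall>\<pi>\<in>S. 0 \<le> \<alpha> \<pi>" "sum \<alpha> S = 1" "vle lam (\<Sum>\<pi>\<in>S. \<alpha> \<pi> *\<^sub>R \<pi>)"
    using lam_sigma by blast
  have "\<xi> \<bullet> lam \<le> \<xi> \<bullet> (\<Sum>\<pi>\<in>S. \<alpha> \<pi> *\<^sub>R \<pi>)"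
    by (rule inner_vle) (use assms a in \<open>auto simp: dual_poly_def\<close>)
  also have "\<dots> = (\<Sum>\<pi>\<in>S. \<alpha> \<pi> * (\<xi> \<bullet> \<pi>))" by (rule inner_sigma)
  also have "\<dots> \<le> (\<Sum>\<pi>\<in>S. \<alpha> \<pi> * 1)"
    by (rule sum_mono) (use assms a in \<open>auto simp: dual_poly_def intro!: mult_left_le\<close>)
  finally show ?thesis using a by simp
qed

definition dead :: "'n \<Rightarrow> bool" where "dead n \<longleftrightarrow> (\<forall>\<pi>\<in>S. \<pi>$n = 0)"

lemma dual_poly_polyhedron: "polyhedron (dual_poly S)"
proof -
  have e: "dual_poly S = \<Inter> ((\<lambda>i. {\<xi>. (- axis i 1) \<bullet> \<xi> \<le> 0}) ` UNIV \<union> (\<lambda>\<pi>. {\<xi>. \<xi> \<bullet> \<pi> \<le> 1}) ` S)"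
    by (auto simp: dual_poly_def nonneg_vec_def inner_axis')
  have h: "polyhedron {\<xi>. \<xi> \<bullet> \<pi> \<le> 1}" for \<pi> :: "real^'n"
    using polyhedron_halfspace_le[of \<pi> 1] by (simp add: inner_commute)
  have h2: "polyhedron {\<xi>::real^'n. (- axis i 1) \<bullet> \<xi> \<le> (0::real)}" for i :: 'n
    using polyhedron_halfspace_le[of "- axis i (1::real)" 0] by simp
  show ?thesis unfolding e
    by (rule polyhedron_Inter) (use finS h h2 in auto)
qed

lemma finite_E: "finite (Eset S)"
  using finite_polyhedron_extreme_points[OF dual_poly_polyhedron] by (simp add: Eset_def)

lemma E_dual: "\<xi> \<in> Eset S \<Longrightarrow> \<xi> \<in> dual_poly S"
  by (simp add: Eset_def extreme_point_of_def)

lemma E_dead: assumes e: "\<xi> \<in> Eset S" and d: "dead n" shows "\<xi>$n = 0"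
proof (rule ccontr)
  assume ne: "\<xi>$n \<noteq> 0"
  have xd: "\<xi> \<in> dual_poly S" using E_dual e by simp
  then have pos: "0 < \<xi>$n" using ne by (auto simp: dual_poly_def nonneg_vec_def less_le)
  define a where "a = \<xi> - (\<xi>$n) *\<^sub>R axis n 1"
  define b where "b = \<xi> + (\<xi>$n) *\<^sub>R axis n 1"
  have pa: "\<pi>$n = 0" if "\<pi> \<in> S" for \<pi> using d that by (simp add: dead_def)
  have "a \<in> dual_poly S"
  proof -
    have "nonneg_vec a" using xd by (auto simp: a_def nonneg_vec_def dual_poly_def axis_def)
    moreover have "a \<bullet> \<pi> \<le> 1" if "\<pi> \<in> S" for \<pi>
      using xd that pa[OF that] by (auto simp: a_def dual_poly_def inner_diff_left inner_axis')
    ultimately show ?thesis by (simp add: dual_poly_def)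
  qed
  moreover have "b \<in> dual_poly S"
  proof -
    have "nonneg_vec b" using xd by (auto simp: b_def nonneg_vec_def dual_poly_def axis_def)
    moreover have "b \<bullet> \<pi> \<le> 1" if "\<pi> \<in> S" for \<pi>
      using xd that pa[OF that] by (auto simp: b_def dual_poly_def inner_add_left inner_axis')
    ultimately show ?thesis by (simp add: dual_poly_def)
  qed
  moreover have "\<xi> \<in> open_segment a b"
  proof -
    have "a \<noteq> b" using pos by (auto simp: a_def b_def vec_eq_iff axis_def)
    moreover have "\<xi> = (1 - 1/2) *\<^sub>R a + (1/2) *\<^sub>R b" by (auto simp: a_def b_def vec_eq_iff algebra_simps)
    ultimately show ?thesis unfolding in_segment by (intro conjI exI[of _ "1/2"]) auto
  qed
  ultimately show False using e by (auto simp: Eset_def extreme_point_of_def)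
qed

lemma ext_ok: assumes e: "e \<in> Eset S" "e \<bullet> lam = 1" and r': "r' \<in> Dfeas S lam q"
  shows "e \<bullet> q \<le> e \<bullet> r'"
proof -
  define T where "T = {z\<in>Eset S. vle e z}"
  have fT: "finite T" using finite_E by (simp add: T_def)
  have eT: "e \<in> T" using e by (simp add: T_def vle_def)
  define sc where "sc z = (\<Sum>i\<in>UNIV. z$i)" for z :: "real^'n"
  have "Max (sc ` T) \<in> sc ` T" using fT eT by (intro Max_in) auto
  then obtain z where zT: "z \<in> T" and zm: "sc z = Max (sc ` T)" by auto
  have zmax: "sc y \<le> sc z" if "y \<in> T" for y using fT that zm by simp
  have zE: "z \<in> Eset S" and ez: "vle e z" using zT by (auto simp: T_def)
  have zS: "z \<in> Sstar S"
  proof -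
    have "\<not> (vle z z' \<and> z' \<noteq> z)" if z': "z' \<in> Eset S" for z'
    proof
      assume h: "vle z z' \<and> z' \<noteq> z"
      then have "z' \<in> T" using ez z' by (auto simp: T_def vle_def intro: order_trans)
      moreover have "sc z < sc z'"
        unfolding sc_def
      proof (rule sum_strict_mono_ex1)
        show "\<forall>i\<in>UNIV. z$i \<le> z'$i" using h by (simp add: vle_def)
        obtain i where "z'$i \<noteq> z$i" using h by (auto simp: vec_eq_iff)
        then have "z$i < z'$i" using h by (metis vle_def order_le_neq_trans)
        then show "\<exists>i\<in>UNIV. z$i < z'$i" by blast
      qed simp
      ultimately show False using zmax by fastforce
    qed
    then show ?thesis using zE by (auto simp: Sstar_def)
  qed
  have "z \<bullet> lam \<le> 1" using dual_lam E_dual[OF zE] by simp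
  moreover have "e \<bullet> lam \<le> z \<bullet> lam"
    using inner_vle[of lam e z] ez lamL by (simp add: Lambda_def inner_commute)
  ultimately have zl: "z \<bullet> lam = 1" using e by simp
  then have zX: "z \<in> Xi S lam" using zS by (simp add: Xi_def)
  then have zq: "z \<bullet> q \<le> z \<bullet> r'" using r' by (auto simp: Dfeas_def)
  define \<delta> where "\<delta> = z - e"
  have dnn: "0 \<le> \<delta>$i" for i using ez by (simp add: \<delta>_def vle_def)
  have "\<delta> \<bullet> lam = 0" using zl e by (simp add: \<delta>_def inner_diff_left)
  then have "(\<Sum>i\<in>UNIV. \<delta>$i * lam$i) = 0" by (simp add: inner_vec_def)
  then have dl: "\<delta>$i * lam$i = 0" for i
    using sum_nonneg_eq_0_iff[of UNIV "\<lambda>i. \<delta>$i * lam$i"] dnn lam_nn by auto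
  have "\<delta>$i * (r'$i - q$i) \<le> 0" for i
  proof (cases "\<delta>$i = 0")
    case False
    then have "lam$i = 0" using dl[of i] by simp
    then have "r'$i \<le> q$i" using r' by (auto simp: Dfeas_def)
    then show ?thesis using dnn[of i] by (simp add: mult_nonneg_nonpos)
  qed simp
  then have "\<delta> \<bullet> (r' - q) \<le> 0" by (simp add: inner_vec_def sum_nonpos)
  moreover have "e \<bullet> (r' - q) = z \<bullet> (r' - q) - \<delta> \<bullet> (r' - q)" by (simp add: \<delta>_def inner_diff_left)
  ultimately have "0 \<le> e \<bullet> (r' - q)" using zq by (simp add: inner_diff_right)
  then show ?thesis by (simp add: inner_diff_right)
qed

definition Bp :: "(real^'n) set" where "Bp = {\<xi>\<in>dual_poly S. \<forall>n. dead n \<longrightarrow> \<xi>$n = 0}"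

lemma Bp_ext: assumes "e extreme_point_of Bp" shows "e \<in> Eset S"
proof -
  have eB: "e \<in> Bp" using assms by (simp add: extreme_point_of_def)
  have "e \<notin> open_segment a b" if a: "a \<in> dual_poly S" and b: "b \<in> dual_poly S" for a b
  proof
    assume "e \<in> open_segment a b"
    then obtain u where u: "a \<noteq> b" "0 < u" "u < 1" "e = (1 - u) *\<^sub>R a + u *\<^sub>R b"
      unfolding in_segment by blast
    have "a \<in> Bp \<and> b \<in> Bp"
    proof -
      have "a$n = 0 \<and> b$n = 0" if d: "dead n" for n
      proof -
        have "e$n = 0" using eB d by (simp add: Bp_def)
        then have "(1 - u) * a$n + u * b$n = 0" using u by simp
        moreover have "0 \<le> a$n" "0 \<le> b$n" using a b by (auto simp: dual_poly_def nonneg_vec_def)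
        ultimately show ?thesis using u
          by (smt (verit) mult_pos_pos mult_nonneg_nonneg)
      qed
      then show ?thesis using a b by (simp add: Bp_def)
    qed
    then show False using assms \<open>e \<in> open_segment a b\<close> by (auto simp: extreme_point_of_def)
  qed
  then show ?thesis using eB by (simp add: Eset_def extreme_point_of_def Bp_def)
qed

lemma Bp_convex: "convex Bp"
proof -
  have "Bp = dual_poly S \<inter> {\<xi>. \<forall>n. dead n \<longrightarrow> \<xi>$n = 0}" by (auto simp: Bp_def)
  moreover have "convex {\<xi>::real^'n. \<forall>n. dead n \<longrightarrow> \<xi>$n = 0}"
    by (rule convexI) auto
  ultimately show ?thesis
    using polyhedron_imp_convex[OF dual_poly_polyhedron] by (simp add: convex_Int)
qed

lemma Bp_compact: "compact Bp"
proof -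
  have "Bp = dual_poly S \<inter> {\<xi>. \<forall>n. dead n \<longrightarrow> \<xi>$n = 0}" by (auto simp: Bp_def)
  moreover have "closed {\<xi>::real^'n. \<forall>n. dead n \<longrightarrow> \<xi>$n = 0}"
    by (intro closed_Collect_all closed_Collect_imp open_Collect_const closed_Collect_eq continuous_intros)
  ultimately have cl: "closed Bp"
    using polyhedron_imp_closed[OF dual_poly_polyhedron] by (simp add: closed_Int)
  define pn where "pn n = (SOME \<pi>. \<pi> \<in> S \<and> \<pi>$n \<noteq> 0)" for n
  define c where "c = (\<chi> n. if dead n then 0 else 1 / (pn n $ n))"
  have "Bp \<subseteq> cbox 0 c"
  proof
    fix \<xi> assume x: "\<xi> \<in> Bp"
    then have xd: "\<xi> \<in> dual_poly S" by (simp add: Bp_def)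
    have "0 \<le> \<xi>$n \<and> \<xi>$n \<le> c$n" for n
    proof (cases "dead n")
      case True then show ?thesis using x by (simp add: Bp_def c_def)
    next
      case False
      then have "\<exists>\<pi>. \<pi> \<in> S \<and> \<pi>$n \<noteq> 0" by (auto simp: dead_def)
      then have p: "pn n \<in> S" "pn n $ n \<noteq> 0" unfolding pn_def by (metis (mono_tags, lifting) someI_ex)+
      then have pp: "0 < pn n $ n" using S_nn[of "pn n" n] by simp
      have "\<xi>$n * pn n $ n \<le> (\<Sum>i\<in>UNIV. \<xi>$i * pn n $ i)"
        by (rule member_le_sum) (use xd p S_nn in \<open>auto simp: dual_poly_def nonneg_vec_def\<close>)
      also have "\<dots> \<le> 1" using xd p by (auto simp: dual_poly_def inner_vec_def)
      finally have "\<xi>$n \<le> 1 / pn n $ n" using pp by (simp add: field_simps)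
      then show ?thesis using False xd by (auto simp: c_def dual_poly_def nonneg_vec_def)
    qed
    then show "\<xi> \<in> cbox 0 c" by (simp add: mem_box_cart)
  qed
  then have "bounded Bp" using bounded_cbox bounded_subset by blast
  then show ?thesis using cl by (simp add: compact_eq_bounded_closed)
qed

lemma lemmaA:
  assumes u: "nonneg_vec u" "\<forall>n. dead n \<longrightarrow> u$n = 0" "\<forall>\<pi>\<in>S. u \<bullet> \<pi> \<le> u \<bullet> lam"
    and r': "r' \<in> Dfeas S lam q"
  shows "u \<bullet> q \<le> u \<bullet> r'"
proof -
  have lnn: "nonneg_vec lam" using lamL by (simp add: Lambda_def)
  have c0: "0 \<le> u \<bullet> lam" using inner_nn[OF u(1) lnn] .
  show ?thesis
  proof (cases "u \<bullet> lam = 0")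
    case True
    have "u$n = 0" for n
    proof (cases "dead n")
      case True then show ?thesis using u by simp
    next
      case False
      then obtain \<pi> where p: "\<pi> \<in> S" "\<pi>$n \<noteq> 0" by (auto simp: dead_def)
      have "u \<bullet> \<pi> \<le> 0" using u(3) p True by auto
      moreover have "u$n * \<pi>$n \<le> (\<Sum>i\<in>UNIV. u$i * \<pi>$i)"
        by (rule member_le_sum) (use u p S_nn in \<open>auto simp: nonneg_vec_def\<close>)
      ultimately have "u$n * \<pi>$n \<le> 0" by (simp add: inner_vec_def)
      moreover have "0 < \<pi>$n" using S_nn[of \<pi> n] p by simp
      moreover have "0 \<le> u$n" using u by (simp add: nonneg_vec_def)
      ultimately show ?thesis by (simp add: mult_le_0_iff)
    qed
    then have "u = 0" by (simp add: vec_eq_iff)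
    then show ?thesis by simp
  next
    case False
    define c where "c = u \<bullet> lam"
    have cp: "0 < c" using False c0 by (simp add: c_def)
    define x where "x = (1/c) *\<^sub>R u"
    have xB: "x \<in> Bp"
    proof -
      have "nonneg_vec x" using u cp by (simp add: x_def nonneg_vec_def)
      moreover have "x \<bullet> \<pi> \<le> 1" if "\<pi> \<in> S" for \<pi>
        using u(3) that cp by (simp add: x_def c_def field_simps)
      ultimately show ?thesis using u by (simp add: Bp_def dual_poly_def x_def)
    qed
    have xl: "x \<bullet> lam = 1" using cp by (simp add: x_def c_def)
    define X where "X = {e. e extreme_point_of Bp}"
    have fX: "finite X" using finite_E Bp_ext by (auto simp: X_def intro: finite_subset)
    have "x \<in> convex hull X"
      using Krein_Milman_Minkowski[OF Bp_compact Bp_convex] xB by (simp add: X_def)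
    then obtain t where t: "\<forall>e\<in>X. 0 \<le> t e" "sum t X = 1" "(\<Sum>e\<in>X. t e *\<^sub>R e) = x"
      using convex_hull_finite[OF fX] by auto
    have XE: "e \<in> Eset S" if "e \<in> X" for e using Bp_ext that by (simp add: X_def)
    have el: "e \<bullet> lam \<le> 1" if "e \<in> X" for e using dual_lam E_dual XE that by blast
    have "(\<Sum>e\<in>X. t e *\<^sub>R e) \<bullet> lam = (\<Sum>e\<in>X. t e * (e \<bullet> lam))"
      by (simp add: inner_sum_left)
    then have "(\<Sum>e\<in>X. t e * (e \<bullet> lam)) = 1"
      using xl t(3) by simp
    then have "(\<Sum>e\<in>X. t e * (1 - e \<bullet> lam)) = 0"
      using t(2) by (simp add: algebra_simps sum_subtractf sum_distrib_left)
    then have z: "t e * (1 - e \<bullet> lam) = 0" if "e \<in> X" for e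
      using sum_nonneg_eq_0_iff[OF fX, of "\<lambda>e. t e * (1 - e \<bullet> lam)"] t(1) el that by auto
    have "0 \<le> t e * (e \<bullet> (r' - q))" if e: "e \<in> X" for e
    proof (cases "t e = 0")
      case False
      then have "e \<bullet> lam = 1" using z[OF e] by simp
      then have "e \<bullet> q \<le> e \<bullet> r'" using ext_ok XE[OF e] r' by blast
      then show ?thesis using t(1) e by (simp add: inner_diff_right)
    qed simp
    then have "0 \<le> (\<Sum>e\<in>X. t e * (e \<bullet> (r' - q)))" by (rule sum_nonneg)
    also have "\<dots> = x \<bullet> (r' - q)" using t(3) by (auto simp: inner_sum_left)
    finally have "0 \<le> x \<bullet> (r' - q)" .
    then have "0 \<le> u \<bullet> (r' - q)" using cp by (simp add: x_def zero_le_divide_iff)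
    then show ?thesis by (simp add: inner_diff_right)
  qed
qed

lemma ev_pos: assumes "0 < a" shows "\<forall>\<^sub>F t in at_right (0::real). 0 < a + t * b"
proof -
  have "((\<lambda>t. a + t * b) \<longlongrightarrow> a + 0 * b) (at_right 0)"
    by (intro tendsto_intros)
  then show ?thesis using assms by (auto dest: order_tendstoD(1))
qed

lemma min_scale:
  assumes q: "nonneg_vec q" and r: "r \<in> Dfeas S lam q" "\<forall>r'\<in>Dfeas S lam q. Lfun f r \<le> Lfun f r'"
    and k: "0 < \<kappa>"
  shows "\<kappa> *\<^sub>R r \<in> Dfeas S lam (\<kappa> *\<^sub>R q) \<and> (\<forall>r'\<in>Dfeas S lam (\<kappa> *\<^sub>R q). Lfun f (\<kappa> *\<^sub>R r) \<le> Lfun f r')"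
proof -
  define D where "D = Dfeas S lam q"
  define w where "w = fvec f r"
  define w' where "w' = fvec f (\<kappa> *\<^sub>R r)"
  have rD: "r \<in> D" using r by (simp add: D_def)
  have rnn: "0 \<le> r$i" for i using r D_nonneg by (auto simp: nonneg_vec_def)
  have vi: "0 \<le> w \<bullet> (r' - r)" if "r' \<in> D" for r'
    unfolding w_def by (rule VI[of D]) (use D_nonneg D_convex r that in \<open>auto simp: D_def\<close>)
  have wi: "w$i = f (r$i)" for i by (simp add: w_def fvec_def)
  have wi': "w'$i = f (\<kappa> * r$i)" for i by (simp add: w'_def fvec_def)
  have wnn: "0 \<le> w$i" for i using wi f_nonneg rnn by simp
  have wnn': "0 \<le> w'$i" for i using wi' f_nonneg rnn k by simp
  have w0: "w$i = 0 \<longleftrightarrow> r$i = 0" for i using wi f_zero_iff rnn by simp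
  have w0': "w'$i = 0 \<longleftrightarrow> r$i = 0" for i using wi' f_zero_iff[of "\<kappa> * r$i"] rnn k by simp
  have wv: "nonneg_vec w" "nonneg_vec w'" using wnn wnn' by (auto simp: nonneg_vec_def)
  have rdead: "r$n = 0" if dn: "dead n" for n
  proof (rule ccontr)
    assume ne: "r$n \<noteq> 0"
    then have pos: "0 < r$n" using rnn[of n] by simp
    define r' where "r' = r - (r$n) *\<^sub>R axis n 1"
    have r'i: "r'$i = (if i = n then 0 else r$i)" for i by (simp add: r'_def axis_def)
    have "r' \<in> D"
    proof -
      have "nonneg_vec r'" using rnn by (simp add: nonneg_vec_def r'i)
      moreover have "\<xi> \<bullet> q \<le> \<xi> \<bullet> r'" if x: "\<xi> \<in> Xi S lam" for \<xi>
      proof -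
        have "\<xi> \<in> Eset S" using x by (simp add: Xi_def Sstar_def)
        then have "\<xi>$n = 0" using E_dead dn by blast
        then have "\<xi> \<bullet> r' = \<xi> \<bullet> r" by (simp add: r'_def inner_diff_right inner_axis)
        then show ?thesis using x rD by (auto simp: D_def Dfeas_def)
      qed
      moreover have "r'$i \<le> q$i" if "lam$i = 0" for i
        using rD that q by (auto simp: r'i D_def Dfeas_def nonneg_vec_def)
      ultimately show ?thesis by (simp add: D_def Dfeas_def)
    qed
    then have "0 \<le> w \<bullet> (r' - r)" by (rule vi)
    moreover have "w \<bullet> (r' - r) = - (r$n * w$n)" by (simp add: r'_def inner_axis)
    moreover have "0 < w$n" using wnn[of n] w0[of n] ne by simp
    moreover have "0 < r$n * w$n" using pos \<open>0 < w$n\<close> by (rule mult_pos_pos)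
    ultimately show False by linarith
  qed
  have wmax: "w \<bullet> \<pi> \<le> w \<bullet> lam" if pS: "\<pi> \<in> S" for \<pi>
  proof (rule ccontr)
    assume "\<not> ?thesis"
    then have gt: "w \<bullet> lam < w \<bullet> \<pi>" by simp
    define d where "d = lam - \<pi>"
    define dt where "dt = (\<chi> i. if r$i = 0 then max (d$i) 0 else d$i)"
    have ev: "\<forall>\<^sub>F t in at_right (0::real). 0 < t \<and> (\<forall>i. 0 \<le> r$i + t * dt$i)"
    proof (intro eventually_conj eventually_at_right_less eventually_all_finite allI)
      fix i
      show "\<forall>\<^sub>F t in at_right (0::real). 0 \<le> r$i + t * dt$i"
      proof (cases "r$i = 0")
        case True
        then show ?thesis
          by (intro eventually_mono[OF eventually_at_right_less]) (simp add: dt_def)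
      next
        case False
        then have "0 < r$i" using rnn[of i] by simp
        then show ?thesis using ev_pos[of "r$i" "dt$i"] by (auto elim: eventually_mono)
      qed
    qed
    then obtain t where t: "0 < t" "\<forall>i. 0 \<le> r$i + t * dt$i"
      using eventually_happens[OF ev] by auto
    define r' where "r' = r + t *\<^sub>R dt"
    have "r' \<in> D"
    proof -
      have "nonneg_vec r'" using t by (simp add: nonneg_vec_def r'_def)
      moreover have "\<xi> \<bullet> q \<le> \<xi> \<bullet> r'" if x: "\<xi> \<in> Xi S lam" for \<xi>
      proof -
        have xl: "\<xi> \<bullet> lam = 1" using x by (simp add: Xi_def)
        have xd: "\<xi> \<in> dual_poly S" using x E_dual by (simp add: Xi_def Sstar_def)
        have "\<xi> \<bullet> \<pi> \<le> 1" using xd pS by (simp add: dual_poly_def)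
        then have "0 \<le> \<xi> \<bullet> d" using xl by (simp add: d_def inner_diff_right)
        also have "\<xi> \<bullet> d \<le> \<xi> \<bullet> dt"
          by (rule inner_vle) (use xd in \<open>auto simp: dual_poly_def vle_def dt_def\<close>)
        finally have "0 \<le> t * (\<xi> \<bullet> dt)" using t by simp
        then have "\<xi> \<bullet> r \<le> \<xi> \<bullet> r'" by (simp add: r'_def inner_add_right)
        then show ?thesis using x rD by (auto simp: D_def Dfeas_def)
      qed
      moreover have "r'$i \<le> q$i" if l0: "lam$i = 0" for i
      proof -
        have "d$i \<le> 0" using l0 S_nn[OF pS, of i] by (simp add: d_def)
        then have "dt$i \<le> 0" by (simp add: dt_def)
        then have "r'$i \<le> r$i" using t by (simp add: r'_def mult_nonneg_nonpos)
        then show ?thesis using rD l0 by (auto simp: D_def Dfeas_def)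
      qed
      ultimately show ?thesis by (simp add: D_def Dfeas_def)
    qed
    then have "0 \<le> w \<bullet> (r' - r)" by (rule vi)
    moreover have "w \<bullet> dt = w \<bullet> d"
      unfolding inner_vec_def by (rule sum.cong) (auto simp: dt_def w0)
    moreover have "w \<bullet> (r' - r) = t * (w \<bullet> dt)" by (simp add: r'_def)
    moreover have "w \<bullet> d < 0" using gt by (simp add: d_def inner_diff_right)
    moreover have "t * (w \<bullet> d) < 0" using t(1) \<open>w \<bullet> d < 0\<close> by (rule mult_pos_neg)
    ultimately show False by (smt (verit))
  qed
  have transfer: "\<forall>\<rho>\<in>S. \<rho> \<bullet> w' \<le> \<pi> \<bullet> w'" if "\<pi> \<in> S" "\<forall>\<rho>\<in>S. \<rho> \<bullet> w \<le> \<pi> \<bullet> w" for \<pi>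
  proof -
    have rn: "nonneg_vec r" using rnn by (simp add: nonneg_vec_def)
    have "\<forall>q \<pi>. nonneg_vec q \<longrightarrow> \<pi> \<in> S \<longrightarrow>
        (\<forall>\<rho>\<in>S. \<rho> \<bullet> fvec f q \<le> \<pi> \<bullet> fvec f q) \<longrightarrow>
        (\<forall>\<kappa>\<ge>0. \<forall>\<rho>\<in>S. \<rho> \<bullet> fvec f (\<kappa> *\<^sub>R q) \<le> \<pi> \<bullet> fvec f (\<kappa> *\<^sub>R q))"
      using adm by (simp add: admissible_f_def)
    then show ?thesis using rn that k unfolding w_def w'_def by auto
  qed
  obtain \<alpha> where a: "\<forall>\<pi>\<in>S. 0 \<le> \<alpha> \<pi>" "sum \<alpha> S = 1" "vle lam (\<Sum>\<pi>\<in>S. \<alpha> \<pi> *\<^sub>R \<pi>)"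
    using lam_sigma by blast
  define \<sigma> where "\<sigma> = (\<Sum>\<pi>\<in>S. \<alpha> \<pi> *\<^sub>R \<pi>)"
  have ls: "lam$i \<le> \<sigma>$i" for i using a(3) by (simp add: \<sigma>_def vle_def)
  have "w \<bullet> lam \<le> w \<bullet> \<sigma>" using inner_vle[OF wv(1)] a(3) by (simp add: \<sigma>_def)
  also have "\<dots> = (\<Sum>\<pi>\<in>S. \<alpha> \<pi> * (w \<bullet> \<pi>))" by (simp add: \<sigma>_def inner_sigma)
  finally have s1: "w \<bullet> lam \<le> (\<Sum>\<pi>\<in>S. \<alpha> \<pi> * (w \<bullet> \<pi>))" .
  have "(\<Sum>\<pi>\<in>S. \<alpha> \<pi> * (w \<bullet> lam - w \<bullet> \<pi>)) = w \<bullet> lam - (\<Sum>\<pi>\<in>S. \<alpha> \<pi> * (w \<bullet> \<pi>))"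
    using a(2) by (simp add: algebra_simps sum_subtractf sum_distrib_right[symmetric])
  moreover have tn: "\<forall>\<pi>\<in>S. 0 \<le> \<alpha> \<pi> * (w \<bullet> lam - w \<bullet> \<pi>)" using a(1) wmax by simp
  ultimately have "(\<Sum>\<pi>\<in>S. \<alpha> \<pi> * (w \<bullet> lam - w \<bullet> \<pi>)) = 0"
    using s1 sum_nonneg[of S "\<lambda>\<pi>. \<alpha> \<pi> * (w \<bullet> lam - w \<bullet> \<pi>)"] by simp
  then have "\<forall>\<pi>\<in>S. \<alpha> \<pi> * (w \<bullet> lam - w \<bullet> \<pi>) = 0"
    using sum_nonneg_eq_0_iff[OF finS, of "\<lambda>\<pi>. \<alpha> \<pi> * (w \<bullet> lam - w \<bullet> \<pi>)"] tn by blast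
  then have ap: "w \<bullet> \<pi> = w \<bullet> lam" if "\<pi> \<in> S" "\<alpha> \<pi> \<noteq> 0" for \<pi>
    using that by auto
  have "w \<bullet> \<sigma> = w \<bullet> lam"
  proof -
    have "(\<Sum>\<pi>\<in>S. \<alpha> \<pi> * (w \<bullet> \<pi>)) = (\<Sum>\<pi>\<in>S. \<alpha> \<pi> * (w \<bullet> lam))"
      by (rule sum.cong) (simp, metis ap mult_zero_left)
    then show ?thesis using a(2) by (simp add: \<sigma>_def inner_sigma sum_distrib_right[symmetric])
  qed
  then have "(\<Sum>i\<in>UNIV. w$i * (\<sigma>$i - lam$i)) = 0" by (simp add: inner_vec_def algebra_simps sum_subtractf)
  then have wsl: "w$i * (\<sigma>$i - lam$i) = 0" for i
    using sum_nonneg_eq_0_iff[of UNIV "\<lambda>i. w$i * (\<sigma>$i - lam$i)"] wnn ls by auto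
  have "\<exists>\<pi>1\<in>S. \<alpha> \<pi>1 \<noteq> 0"
  proof (rule ccontr)
    assume "\<not> ?thesis" then have "sum \<alpha> S = 0" by simp
    then show False using a(2) by simp
  qed
  then obtain \<pi>1 where p1: "\<pi>1 \<in> S" "\<alpha> \<pi>1 \<noteq> 0" by blast
  have inA: "\<forall>\<rho>\<in>S. \<rho> \<bullet> w' \<le> \<pi> \<bullet> w'" if "\<pi> \<in> S" "w \<bullet> \<pi> = w \<bullet> lam" for \<pi>
    using transfer[OF that(1)] that wmax by (simp add: inner_commute)
  have A1: "\<forall>\<rho>\<in>S. \<rho> \<bullet> w' \<le> \<pi>1 \<bullet> w'" using inA p1 ap by blast
  have "w' \<bullet> \<sigma> = w' \<bullet> \<pi>1"
  proof -
    have "w' \<bullet> \<pi> = w' \<bullet> \<pi>1" if "\<pi> \<in> S" "\<alpha> \<pi> \<noteq> 0" for \<pi>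
      using inA[OF that(1) ap[OF that]] A1 that(1) p1(1) by (force simp: inner_commute)
    then have "(\<Sum>\<pi>\<in>S. \<alpha> \<pi> * (w' \<bullet> \<pi>)) = (\<Sum>\<pi>\<in>S. \<alpha> \<pi> * (w' \<bullet> \<pi>1))"
      by (intro sum.cong) auto
    then show ?thesis using a(2) by (simp add: \<sigma>_def inner_sigma sum_distrib_right[symmetric])
  qed
  moreover have "w' \<bullet> \<sigma> = w' \<bullet> lam"
  proof -
    have z: "w'$i * (\<sigma>$i - lam$i) = 0" for i
      using wsl[of i] w0[of i] w0'[of i] by auto
    have "(\<Sum>i\<in>UNIV. w'$i * (\<sigma>$i - lam$i)) = 0" by (rule sum.neutral) (use z in blast)
    then have "w' \<bullet> (\<sigma> - lam) = 0" by (simp add: inner_vec_def)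
    then show ?thesis by (simp add: inner_diff_right)
  qed
  ultimately have w'l: "w' \<bullet> lam = w' \<bullet> \<pi>1" by simp
  have w'max: "w' \<bullet> \<pi> \<le> w' \<bullet> lam" if "\<pi> \<in> S" for \<pi>
    using A1 that w'l by (simp add: inner_commute)
  have w'eq: "w' \<bullet> \<pi> = w' \<bullet> lam" if "\<pi> \<in> S" "w \<bullet> \<pi> = w \<bullet> lam" for \<pi>
    using inA[OF that] p1(1) w'max[OF that(1)] w'l by (force simp: inner_commute)
  have ev2: "\<forall>\<^sub>F e in at_right (0::real). 0 < e \<and> (\<forall>i. e * w'$i \<le> w$i) \<and>
      (\<forall>\<pi>\<in>S. w \<bullet> \<pi> < w \<bullet> lam \<longrightarrow> 0 < (w \<bullet> lam - w \<bullet> \<pi>) + e * (w' \<bullet> \<pi> - w' \<bullet> lam))"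
  proof (intro eventually_conj eventually_at_right_less eventually_all_finite eventually_ball_finite finS ballI allI)
    fix i
    show "\<forall>\<^sub>F e in at_right (0::real). e * w'$i \<le> w$i"
    proof (cases "r$i = 0")
      case True then have "w$i = 0" "w'$i = 0" using w0 w0' by auto
      then show ?thesis by simp
    next
      case False
      then have "0 < w$i" using wnn[of i] w0[of i] by simp
      then show ?thesis using ev_pos[of "w$i" "- w'$i"] by (auto elim: eventually_mono simp: mult.commute)
    qed
  next
    fix \<pi> assume "\<pi> \<in> S"
    show "\<forall>\<^sub>F e in at_right (0::real). w \<bullet> \<pi> < w \<bullet> lam \<longrightarrow> 0 < (w \<bullet> lam - w \<bullet> \<pi>) + e * (w' \<bullet> \<pi> - w' \<bullet> lam)"
    proof (cases "w \<bullet> \<pi> < w \<bullet> lam")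
      case True
      then show ?thesis using ev_pos[of "w \<bullet> lam - w \<bullet> \<pi>" "w' \<bullet> \<pi> - w' \<bullet> lam"]
        by (auto elim: eventually_mono)
    qed simp
  qed
  then obtain \<epsilon> where e: "0 < \<epsilon>" "\<forall>i. \<epsilon> * w'$i \<le> w$i"
      "\<forall>\<pi>\<in>S. w \<bullet> \<pi> < w \<bullet> lam \<longrightarrow> 0 < (w \<bullet> lam - w \<bullet> \<pi>) + \<epsilon> * (w' \<bullet> \<pi> - w' \<bullet> lam)"
    using eventually_happens[OF ev2] by auto
  define u where "u = w - \<epsilon> *\<^sub>R w'"
  have unn: "nonneg_vec u" using e(2) by (simp add: u_def nonneg_vec_def)
  have udead: "\<forall>n. dead n \<longrightarrow> u$n = 0"
  proof (intro allI impI)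
    fix n assume "dead n"
    then have "w$n = 0" "w'$n = 0" using rdead w0 w0' by auto
    then show "u$n = 0" by (simp add: u_def)
  qed
  have umax: "\<forall>\<pi>\<in>S. u \<bullet> \<pi> \<le> u \<bullet> lam"
  proof
    fix \<pi> assume pS: "\<pi> \<in> S"
    show "u \<bullet> \<pi> \<le> u \<bullet> lam"
    proof (cases "w \<bullet> \<pi> < w \<bullet> lam")
      case True
      then have h: "0 < (w \<bullet> lam - w \<bullet> \<pi>) + \<epsilon> * (w' \<bullet> \<pi> - w' \<bullet> lam)" using e(3) pS by blast
      have "u \<bullet> \<pi> = w \<bullet> \<pi> - \<epsilon> * (w' \<bullet> \<pi>)" "u \<bullet> lam = w \<bullet> lam - \<epsilon> * (w' \<bullet> lam)"
        by (simp_all add: u_def inner_diff_left)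
      moreover have "\<epsilon> * (w' \<bullet> \<pi> - w' \<bullet> lam) = \<epsilon> * (w' \<bullet> \<pi>) - \<epsilon> * (w' \<bullet> lam)"
        by (rule right_diff_distrib)
      ultimately show ?thesis using h by linarith
    next
      case False
      then have "w \<bullet> \<pi> = w \<bullet> lam" using wmax[OF pS] by simp
      then show ?thesis using w'eq[OF pS] by (simp add: u_def inner_diff_left)
    qed
  qed
  have w'dead: "\<forall>n. dead n \<longrightarrow> w'$n = 0" using rdead w0' by blast
  have A_w': "w' \<bullet> q \<le> w' \<bullet> r'" if "r' \<in> D" for r'
    by (rule lemmaA[OF wv(2) w'dead]) (use w'max that in \<open>auto simp: D_def\<close>)
  have A_u: "u \<bullet> q \<le> u \<bullet> r" by (rule lemmaA[OF unn udead umax]) (use rD in \<open>simp add: D_def\<close>)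
  have "0 \<le> w \<bullet> (q - r)" by (rule vi) (use q in \<open>simp add: D_def D_self\<close>)
  moreover have "w = u + \<epsilon> *\<^sub>R w'" by (simp add: u_def)
  ultimately have "0 \<le> u \<bullet> (q - r) + \<epsilon> * (w' \<bullet> (q - r))" by (simp add: inner_add_left)
  moreover have "w' \<bullet> q \<le> w' \<bullet> r" using A_w' rD by simp
  moreover have "u \<bullet> (q - r) \<le> 0" using A_u by (simp add: inner_diff_right)
  ultimately have "0 \<le> \<epsilon> * (w' \<bullet> (q - r))" by linarith
  then have "0 \<le> w' \<bullet> (q - r)" using e(1) by (simp add: zero_le_mult_iff)
  then have w'qr: "w' \<bullet> r \<le> w' \<bullet> q" by (simp add: inner_diff_right)
  have krD: "\<kappa> *\<^sub>R r \<in> Dfeas S lam (\<kappa> *\<^sub>R q)" using D_scale[OF k] rD by (simp add: D_def)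
  have "Lfun f (\<kappa> *\<^sub>R r) \<le> Lfun f r''" if r'': "r'' \<in> Dfeas S lam (\<kappa> *\<^sub>R q)" for r''
  proof -
    define r' where "r' = (1/\<kappa>) *\<^sub>R r''"
    have "\<kappa> *\<^sub>R r' = r''" using k by (simp add: r'_def)
    then have r'D: "r' \<in> D" using D_scale[OF k, of r' q] r'' by (simp add: D_def)
    have "w' \<bullet> q \<le> w' \<bullet> r'" by (rule A_w'[OF r'D])
    then have "0 \<le> w' \<bullet> (r' - r)" using w'qr by (simp add: inner_diff_right)
    then have "0 \<le> \<kappa> * (w' \<bullet> (r' - r))" using k by simp
    also have "\<kappa> * (w' \<bullet> (r' - r)) = w' \<bullet> (r'' - \<kappa> *\<^sub>R r)"
      using \<open>\<kappa> *\<^sub>R r' = r''\<close> by (auto simp: inner_diff_right right_diff_distrib)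
    also have "\<dots> \<le> Lfun f r'' - Lfun f (\<kappa> *\<^sub>R r)"
      unfolding w'_def by (rule L_ineq) (use krD r'' D_nonneg in auto)
    finally show ?thesis by simp
  qed
  then show ?thesis using krD by blast
qed

end

theorem lemma5p9:
  fixes f :: "real \<Rightarrow> real" and S :: "(real^'n) set" and lam q :: "real^'n" and \<kappa> :: real
  assumes "finite S"
    and "\<forall>\<pi>\<in>S. nonneg_vec \<pi>"
    and "admissible_f f S"
    and "lam \<in> Lambda S"
    and "nonneg_vec q"
    and "\<kappa> > 0"
  shows "Delta f S lam (\<kappa> *\<^sub>R q) = \<kappa> *\<^sub>R Delta f S lam q"
proof -
  interpret qs f S lam using assms(1-4) by unfold_locales
  obtain r where r: "r \<in> Dfeas S lam q" "\<forall>r'\<in>Dfeas S lam q. Lfun f r \<le> Lfun f r'"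
    using exists_min[OF assms(5)] by blast
  have m: "\<kappa> *\<^sub>R r \<in> Dfeas S lam (\<kappa> *\<^sub>R q)"
    "\<forall>r'\<in>Dfeas S lam (\<kappa> *\<^sub>R q). Lfun f (\<kappa> *\<^sub>R r) \<le> Lfun f r'"
    using min_scale[OF assms(5) r assms(6)] by auto
  have d1: "Delta f S lam q = r"
    unfolding Delta_def
  proof (rule the_equality)
    show "r \<in> Dfeas S lam q \<and> (\<forall>r'\<in>Dfeas S lam q. Lfun f r \<le> Lfun f r')" using r by blast
    fix x assume "x \<in> Dfeas S lam q \<and> (\<forall>r'\<in>Dfeas S lam q. Lfun f x \<le> Lfun f r')"
    then show "x = r" using unique_min[of x "Dfeas S lam q" r] r D_nonneg D_convex by blast
  qed
  have d2: "Delta f S lam (\<kappa> *\<^sub>R q) = \<kappa> *\<^sub>R r"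
    unfolding Delta_def
  proof (rule the_equality)
    show "\<kappa> *\<^sub>R r \<in> Dfeas S lam (\<kappa> *\<^sub>R q) \<and> (\<forall>r'\<in>Dfeas S lam (\<kappa> *\<^sub>R q). Lfun f (\<kappa> *\<^sub>R r) \<le> Lfun f r')"
      using m by blast
    fix x assume "x \<in> Dfeas S lam (\<kappa> *\<^sub>R q) \<and> (\<forall>r'\<in>Dfeas S lam (\<kappa> *\<^sub>R q). Lfun f x \<le> Lfun f r')"
    then show "x = \<kappa> *\<^sub>R r" using unique_min[of x "Dfeas S lam (\<kappa> *\<^sub>R q)" "\<kappa> *\<^sub>R r"] m D_nonneg D_convex by blast
  qed
  show ?thesis using d1 d2 by simp
qed

end
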